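(* Let $p<q$ be coprime positive integers and $m$ a positive integer. Let $A=\mathbb C[X_0,\dots,X_4]$, graded by $\mathbb Z\times\mathbb Z/m\mathbb Z$ with $X_0$ of degree $(1,0)$, $X_1,X_2$ of degree $(-p,-1)$, $X_3,X_4$ of degree $(q,1)$, and for $s\in\mathbb C$ let $I_s=(X_0^{q-p}-X_1X_4,\;X_2,\;X_3,\;s-X_0^{mp}X_1^{m})$. Then $\dim(A/I_1)_{(n,d)}\ge 1$ and $\dim(A/I_0)_{(n,d)}\ge 1$ for all $(n,d)\in\mathbb Z\times\mathbb Z/m\mathbb Z$.
   Context: The grading is the weight grading for the action of $G_0\times G_m$ ($G_0\cong\mathbb C^*$, $G_m\cong\mu_m$) on $\mathbb C^5$ given by $t\cdot(x_0,\dots,x_4)=(tx_0,t^{-p}x_1,t^{-p}x_2,t^qx_3,t^qx_4)$ and $\zeta\cdot(x_0,\dots,x_4)=(x_0,\zeta^{-1}x_1,\zeta^{-1}x_2,\zeta x_3,\zeta x_4)$. *)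

theory Defs
  imports Complex_Main "HOL-Library.Poly_Mapping" "HOL-Library.Numeral_Type"
begin

text \<open>The polynomial ring A = C[X_0,...,X_4]: finitely supported maps from
  monomials (exponent vectors indexed by the 5-element type) to complex coefficients.\<close>

type_synonym mon5 = "5 \<Rightarrow>\<^sub>0 nat"
type_synonym poly5 = "mon5 \<Rightarrow>\<^sub>0 complex"

definition Var :: "5 \<Rightarrow> poly5" where
  "Var i = Poly_Mapping.single (Poly_Mapping.single i 1) 1"

definition const5 :: "complex \<Rightarrow> poly5" where
  "const5 c = Poly_Mapping.single 0 c"

definition zdeg :: "nat \<Rightarrow> nat \<Rightarrow> mon5 \<Rightarrow> int" where
  "zdeg p q a = int (Poly_Mapping.lookup a (0::5)) - int p * int (Poly_Mapping.lookup a 1 + Poly_Mapping.lookup a 2)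
                 + int q * int (Poly_Mapping.lookup a 3 + Poly_Mapping.lookup a 4)"

definition mdeg :: "mon5 \<Rightarrow> int" where
  "mdeg a = int (Poly_Mapping.lookup a 3 + Poly_Mapping.lookup a 4) - int (Poly_Mapping.lookup a 1 + Poly_Mapping.lookup a 2)"

definition homogeneous_of :: "nat \<Rightarrow> nat \<Rightarrow> nat \<Rightarrow> int \<Rightarrow> int \<Rightarrow> poly5 \<Rightarrow> bool" where
  "homogeneous_of p q m n d f \<longleftrightarrow>
     (\<forall>a \<in> Poly_Mapping.keys f. zdeg p q a = n \<and> mdeg a mod int m = d mod int m)"

definition gen_ideal :: "'a::comm_ring_1 list \<Rightarrow> 'a set" where
  "gen_ideal gs = {(\<Sum>i<length gs. cs ! i * gs ! i) | cs. length cs = length gs}"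

definition I_s :: "nat \<Rightarrow> nat \<Rightarrow> nat \<Rightarrow> complex \<Rightarrow> poly5 set" where
  "I_s p q m s = gen_ideal
     [Var 0 ^ (q - p) - Var 1 * Var 4, Var 2, Var 3,
      const5 s - Var 0 ^ (m * p) * Var 1 ^ m]"

text \<open>The graded piece (A/I)_(n,d) = A_(n,d) / (I \<inter> A_(n,d)) (I is homogeneous), as the set of
  cosets f + I of homogeneous f of degree (n,d). Its dimension is \<ge> 1 iff it contains a
  coset other than the zero coset I.\<close>
definition quot_piece :: "nat \<Rightarrow> nat \<Rightarrow> nat \<Rightarrow> poly5 set \<Rightarrow> int \<Rightarrow> int \<Rightarrow> poly5 set set" where
  "quot_piece p q m I n d = {{f + g | g. g \<in> I} | f. homogeneous_of p q m n d f}"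

definition quot_piece_nonzero :: "nat \<Rightarrow> nat \<Rightarrow> nat \<Rightarrow> poly5 set \<Rightarrow> int \<Rightarrow> int \<Rightarrow> bool" where
  "quot_piece_nonzero p q m I n d \<longleftrightarrow> (\<exists>C \<in> quot_piece p q m I n d. C \<noteq> I)"

end

theory Submission imports Defs "HOL-Computational_Algebra.Polynomial" begin
definition M :: "(5 \<Rightarrow> complex poly) \<Rightarrow> mon5 \<Rightarrow> complex poly" where
  "M v a = (\<Prod>i\<in>UNIV. v i ^ Poly_Mapping.lookup a i)"

definition E :: "(5 \<Rightarrow> complex poly) \<Rightarrow> poly5 \<Rightarrow> complex poly" where
  "E v f = (\<Sum>a\<in>Poly_Mapping.keys f. smult (Poly_Mapping.lookup f a) (M v a))"

lemma M_add: "M v (a + b) = M v a * M v b"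
  by (simp add: M_def lookup_add power_add prod.distrib)

lemma M_zero: "M v 0 = 1"
  by (simp add: M_def)

lemma E_superset:
  assumes "finite S" "Poly_Mapping.keys f \<subseteq> S"
  shows "E v f = (\<Sum>a\<in>S. smult (Poly_Mapping.lookup f a) (M v a))"
  unfolding E_def
  by (rule sum.mono_neutral_left) (use assms in \<open>auto simp: in_keys_iff\<close>)

lemma E_add: "E v (f + g) = E v f + E v g"
proof -
  let ?S = "Poly_Mapping.keys f \<union> Poly_Mapping.keys g"
  have "E v (f + g) = (\<Sum>a\<in>?S. smult (Poly_Mapping.lookup (f+g) a) (M v a))"
    by (rule E_superset) (auto simp: keys_add)
  also have "\<dots> = (\<Sum>a\<in>?S. smult (Poly_Mapping.lookup f a) (M v a)) + (\<Sum>a\<in>?S. smult (Poly_Mapping.lookup g a) (M v a))"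
    by (simp add: lookup_add smult_add_left sum.distrib)
  also have "\<dots> = E v f + E v g"
    by (simp add: E_superset[symmetric])
  finally show ?thesis .
qed

lemma E_zero: "E v 0 = 0"
  by (simp add: E_def)

lemma E_single: "E v (Poly_Mapping.single a c) = smult c (M v a)"
  by (subst E_superset[of "{a}"]) auto

lemma E_sum: "E v (sum F A) = (\<Sum>x\<in>A. E v (F x))"
  by (induction A rule: infinite_finite_induct) (auto simp: E_zero E_add)

lemma E_diff: "E v (f - g) = E v f - E v g"
  using E_add[of v "f - g" g] by simp

lemma expand: "f = (\<Sum>a\<in>Poly_Mapping.keys f. Poly_Mapping.single a (Poly_Mapping.lookup f a))"
  by (rule poly_mapping_eqI) (auto simp: lookup_sum lookup_single when_def in_keys_iff)

lemma E_mult: "E v (f * g) = E v f * E v g"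
proof -
  let ?F = "Poly_Mapping.keys f" and ?G = "Poly_Mapping.keys g"
  have "f * g = (\<Sum>a\<in>?F. Poly_Mapping.single a (Poly_Mapping.lookup f a)) * (\<Sum>b\<in>?G. Poly_Mapping.single b (Poly_Mapping.lookup g b))"
    by (subst (1) expand, subst (1) expand[of g]) simp
  also have "\<dots> = (\<Sum>a\<in>?F. \<Sum>b\<in>?G. Poly_Mapping.single (a + b) (Poly_Mapping.lookup f a * Poly_Mapping.lookup g b))"
    by (simp add: sum_product mult_single)
  finally have "E v (f * g) = (\<Sum>a\<in>?F. \<Sum>b\<in>?G. smult (Poly_Mapping.lookup f a * Poly_Mapping.lookup g b) (M v a * M v b))"
    by (simp add: E_sum E_single M_add)
  also have "\<dots> = E v f * E v g"
    by (simp add: E_def sum_product mult_smult_left mult_smult_right smult_smult mult.commute)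
  finally show ?thesis .
qed

lemma E_one: "E v 1 = 1"
  using E_single[of v 0 1] by (simp add: M_zero)

lemma E_power: "E v (f ^ k) = E v f ^ k"
  by (induction k) (auto simp: E_one E_mult)

lemma E_Var: "E v (Var i) = v i"
proof -
  have "\<And>j. v j ^ Poly_Mapping.lookup (Poly_Mapping.single i 1) j = (if i = j then v i else 1)"
    by (auto simp: lookup_single when_def)
  then show ?thesis
    by (simp add: Var_def E_single M_def)
qed

lemma E_const: "E v (const5 c) = [:c:]"
  by (simp add: const5_def E_single M_zero)

lemma not_in_ideal:
  assumes "\<forall>g\<in>set gs. r dvd E v g" "\<not> r dvd E v f"
  shows "f \<notin> gen_ideal gs"
proof
  assume "f \<in> gen_ideal gs"
  then obtain cs where f: "f = (\<Sum>i<length gs. cs ! i * gs ! i)" by (auto simp: gen_ideal_def)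
  have "r dvd E v f" unfolding f E_sum E_mult
    by (rule dvd_sum) (use assms(1) in auto)
  with assms(2) show False by simp
qed

lemma zero_in_ideal: "0 \<in> gen_ideal gs"
  unfolding gen_ideal_def
  by (rule CollectI, rule exI[of _ "replicate (length gs) 0"]) auto

lemma Var_power: "Var i ^ k = Poly_Mapping.single (Poly_Mapping.single i k) 1"
proof (induction k)
  case 0 then show ?case by simp
next
  case (Suc k)
  then show ?case by (simp add: Var_def mult_single single_add[symmetric])
qed

lemma mono_homog:
  assumes "int a - int p * int b + int q * int c = n" "(int c - int b) mod int m = d mod int m"
  shows "homogeneous_of p q m n d (Var 0 ^ a * Var 1 ^ b * Var 4 ^ c)"
proof -
  have "Var 0 ^ a * Var 1 ^ b * Var 4 ^ c = Poly_Mapping.single (Poly_Mapping.single 0 a + Poly_Mapping.single 1 b + Poly_Mapping.single 4 c) 1"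
    by (simp add: Var_power mult_single)
  then show ?thesis using assms
    by (simp add: homogeneous_of_def zdeg_def mdeg_def lookup_add lookup_single)
qed

lemma E_mono: "E v (Var 0 ^ a * Var 1 ^ b * Var 4 ^ c) = v 0 ^ a * v 1 ^ b * v 4 ^ c"
  by (simp add: E_mult E_power E_Var)


lemma X_pow_not_dvd:
  assumes "k < N"
  shows "\<not> ([:0,1:] :: complex poly) ^ N dvd [:0,1:] ^ k"
proof
  assume "([:0,1:] :: complex poly) ^ N dvd [:0,1:] ^ k"
  then have "degree (([:0,1:] :: complex poly) ^ N) \<le> degree (([:0,1:] :: complex poly) ^ k)"
    by (rule dvd_imp_degree_le) simp
  with assms show False by (simp add: degree_power_eq)
qed

lemma quot_nz:
  assumes "homogeneous_of p q m n d f" "f \<notin> I" "0 \<in> I"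
  shows "quot_piece_nonzero p q m I n d"
proof -
  let ?C = "{f + g | g. g \<in> I}"
  have "?C \<in> quot_piece p q m I n d" using assms(1) by (auto simp: quot_piece_def)
  moreover have "f \<in> ?C" using assms(3) by force
  ultimately show ?thesis using assms(2) unfolding quot_piece_nonzero_def by blast
qed

lemma X1: "\<not> [:0,1:] dvd (1::complex poly)"
  using X_pow_not_dvd[of 0 1] by simp

lemma X1': "\<not> is_unit (pCons (0::complex) 1)"
  using X1 one_pCons by metis

lemma mono_not_I1: "Var 0 ^ a * Var 1 ^ b * Var 4 ^ c \<notin> I_s p q m 1"
proof -
  define v :: "5 \<Rightarrow> complex poly" where "v i = (if i = 2 \<or> i = 3 then 0 else 1)" for i
  show ?thesis unfolding I_s_def
    by (rule not_in_ideal[where v = v and r = "[:0,1:]"])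
       (auto simp: E_mono E_diff E_mult E_power E_Var E_const v_def X1 X1' one_pCons[symmetric])
qed

lemma mono_not_I0_A:
  assumes "a + (q - p) * c < m * p"
  shows "Var 0 ^ a * Var 1 ^ b * Var 4 ^ c \<notin> I_s p q m 0"
proof -
  define v :: "5 \<Rightarrow> complex poly" where
    "v i = (if i = 0 then [:0,1:] else if i = 4 then [:0,1:] ^ (q - p) else if i = 1 then 1 else 0)" for i
  have Ef: "E v (Var 0 ^ a * Var 1 ^ b * Var 4 ^ c) = [:0,1:] ^ (a + (q - p) * c)"
    by (simp add: E_mono v_def power_add power_mult)
  have nd: "\<not> [:0,1:] ^ (m * p) dvd ([:0,1:] ^ (a + (q - p) * c) :: complex poly)"
    by (rule X_pow_not_dvd) (rule assms)
  show ?thesis unfolding I_s_def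
    apply (rule not_in_ideal[where v = v and r = "[:0,1:] ^ (m * p)"])
    subgoal by (auto simp: E_diff E_mult E_power E_Var E_const v_def power_mult_distrib mult.commute)
    subgoal unfolding Ef by (rule nd)
    done
qed

lemma mono_not_I0_B:
  assumes "a + (q - p) * b < m * q" "p \<le> q"
  shows "Var 0 ^ a * Var 1 ^ b * Var 4 ^ c \<notin> I_s p q m 0"
proof -
  define v :: "5 \<Rightarrow> complex poly" where
    "v i = (if i = 0 then [:0,1:] else if i = 1 then [:0,1:] ^ (q - p) else if i = 4 then 1 else 0)" for i
  have Ef: "E v (Var 0 ^ a * Var 1 ^ b * Var 4 ^ c) = [:0,1:] ^ (a + (q - p) * b)"
    by (simp add: E_mono v_def power_add power_mult)
  moreover have "([:0,1:]::complex poly) ^ (m * p) * ([:0,1:] ^ (q - p)) ^ m = [:0,1:] ^ (m * q)"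
  proof -
    have "m * p + (q - p) * m = m * q" using assms(2) by (simp add: algebra_simps diff_mult_distrib)
    then show ?thesis by (metis power_add power_mult)
  qed
  moreover have nd: "\<not> [:0,1:] ^ (m * q) dvd ([:0,1:] ^ (a + (q - p) * b) :: complex poly)"
    by (rule X_pow_not_dvd) (rule assms)
  ultimately show ?thesis unfolding I_s_def
    apply (intro not_in_ideal[where v = v and r = "[:0,1:] ^ (m * q)"])
    subgoal by (auto simp: E_diff E_mult E_power E_Var E_const v_def)
    subgoal unfolding Ef by (rule nd)
    done
qed

theorem lemma4p6:
  fixes p q m :: nat
  assumes "0 < p" "p < q" "coprime p q" "0 < m"
  shows "\<forall>n d :: int. quot_piece_nonzero p q m (I_s p q m 1) n d
                   \<and> quot_piece_nonzero p q m (I_s p q m 0) n d"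
proof (intro allI)
  fix n d :: int
  obtain a b c where H: "homogeneous_of p q m n d (Var 0 ^ a * Var 1 ^ b * Var 4 ^ c)"
    and N: "Var 0 ^ a * Var 1 ^ b * Var 4 ^ c \<notin> I_s p q m 0"
  proof (cases "n \<le> 0")
    case True
    define e where "e = d + int m * ((n - int p * d) div (int p * int m))"
    have r: "n - int p * e = (n - int p * d) mod (int p * int m)"
      unfolding e_def by (simp add: algebra_simps minus_div_mult_eq_mod[symmetric])
    have pm: "int p * int m > 0" using assms by simp
    have r0: "0 \<le> n - int p * e" and r1: "n - int p * e < int p * int m"
      using r pm by simp_all
    have e0: "e \<le> 0"
    proof (rule ccontr)
      assume "\<not> e \<le> 0"
      then have "int p * e > 0" using assms by simp
      with r0 True show False by simp
    qed
    have em: "e mod int m = d mod int m" unfolding e_def by simp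
    show ?thesis
    proof (rule that[of "nat (n - int p * e)" "nat (- e)" 0])
      show "homogeneous_of p q m n d (Var 0 ^ nat (n - int p * e) * Var 1 ^ nat (- e) * Var 4 ^ 0)"
        by (rule mono_homog) (use r0 e0 em in auto)
      show "Var 0 ^ nat (n - int p * e) * Var 1 ^ nat (- e) * Var 4 ^ 0 \<notin> I_s p q m 0"
        by (rule mono_not_I0_A) (use r1 r0 in \<open>simp add: nat_less_iff mult.commute\<close>)
    qed
  next
    case False
    define e where "e = d + int m * ((n - int q * d) div (int q * int m))"
    have r: "n - int q * e = (n - int q * d) mod (int q * int m)"
      unfolding e_def by (simp add: algebra_simps minus_div_mult_eq_mod[symmetric])
    have pm: "int q * int m > 0" using assms by simp
    have r0: "0 \<le> n - int q * e" and r1: "n - int q * e < int q * int m"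
      using r pm by simp_all
    have em: "e mod int m = d mod int m" unfolding e_def by simp
    show ?thesis
    proof (cases "e \<ge> 0")
      case True
      show ?thesis
      proof (rule that[of "nat (n - int q * e)" 0 "nat e"])
        show "homogeneous_of p q m n d (Var 0 ^ nat (n - int q * e) * Var 1 ^ 0 * Var 4 ^ nat e)"
          by (rule mono_homog) (use r0 True em in auto)
        show "Var 0 ^ nat (n - int q * e) * Var 1 ^ 0 * Var 4 ^ nat e \<notin> I_s p q m 0"
          by (rule mono_not_I0_B) (use r1 r0 assms in \<open>simp_all add: nat_less_iff mult.commute\<close>)
      qed
    next
      case neg: False
      have "int p * e \<le> 0" using neg by (simp add: mult_nonneg_nonpos)
      then have a0: "0 \<le> n - int p * e" using False by linarith
      have cost: "(n - int p * e) + (int q - int p) * (- e) = n - int q * e"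
        by (simp add: algebra_simps)
      show ?thesis
      proof (rule that[of "nat (n - int p * e)" "nat (- e)" 0])
        show "homogeneous_of p q m n d (Var 0 ^ nat (n - int p * e) * Var 1 ^ nat (- e) * Var 4 ^ 0)"
          by (rule mono_homog) (use a0 neg em in auto)
        have "nat (n - int p * e) + (q - p) * nat (- e) < m * q"
        proof -
          have i1: "int (nat (n - int p * e)) = n - int p * e" using a0 by simp
          have i2: "int (nat (- e)) = - e" using neg by simp
          have i3: "int (q - p) = int q - int p" using assms(2) by simp
          have "int (nat (n - int p * e) + (q - p) * nat (- e)) = n - int q * e"
            unfolding of_nat_add of_nat_mult i1 i2 i3 cost ..
          then have "int (nat (n - int p * e) + (q - p) * nat (- e)) < int (m * q)"
            using r1 by (simp add: mult.commute)
          then show ?thesis by (rule of_nat_less_imp_less)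
        qed
        then show "Var 0 ^ nat (n - int p * e) * Var 1 ^ nat (- e) * Var 4 ^ 0 \<notin> I_s p q m 0"
          by (rule mono_not_I0_B) (use assms in simp)
      qed
    qed
  qed
  have z: "0 \<in> I_s p q m s" for s unfolding I_s_def by (rule zero_in_ideal)
  show "quot_piece_nonzero p q m (I_s p q m 1) n d \<and> quot_piece_nonzero p q m (I_s p q m 0) n d"
    using quot_nz[OF H mono_not_I1 z] quot_nz[OF H N z] by blast
qed

end
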